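(* Consider the SR2 method (described in the context) applied to $\min_x F(x) := f(x) + \mathcal{R}(x)$, and suppose Assumptions (A1), (A3) and (A5) of the context hold. Let $0<\epsilon<1$ and let $t(\epsilon)$ be the first iteration with $\mathbb{E}_{\hat\xi_{t}}[\|s^\xi\|^2]\le\epsilon^2$. Then $$\mathbb{E}_{\hat\xi_{t(\epsilon)}}\big[\operatorname{dist}\big(0,\hat\partial F(x_{t(\epsilon)}+s^\xi)\big)^2\big] \le C\epsilon^2 + 3\,\mathbb{E}_{\hat\xi_{t(\epsilon)}}\big[\|\nabla f(x_{t(\epsilon)}) - g^\xi\|^2\big],$$ where $C = 3(L^2+\sigma_{\max}^2)$.
   Context: Problem: $F(x) = f(x) + \mathcal{R}(x)$ with $f(x) = \frac{1}{N}\sum_{i=1}^N f_i(x)$, $f_i:\mathbb{R}^n\to\mathbb{R}$ differentiable, and $\mathcal{R}:\mathbb{R}^n \to \mathbb{R}\cup\{\pm\infty\}$. For a nonempty sample $\xi \subseteq \{1,\dots,N\}$ set $f(x,\xi) := \frac{1}{|\xi|}\sum_{j\in\xi} f_j(x)$ and $\nabla f(x,\xi) := \frac{1}{|\xi|}\sum_{j\in\xi}\nabla f_j(x)$. A function $\mathcal{R}$ is proper if it never equals $-\infty$ and is finite somewhere; it is prox-bounded if there are $x$ and $\mu>0$ with $\inf_w \{\tfrac{1}{2}\mu^{-1}\|x-w\|^2 + \mathcal{R}(w)\} > -\infty$; the supremum of such $\mu$ is its prox-boundedness threshold. The Fréchet subdifferential $\hat\partial\phi(\bar x)$ of $\phi$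 at a point $\bar x$ where $\phi$ is finite is the set of $v$ with $\liminf_{x\to\bar x, x\ne\bar x} \frac{\phi(x)-\phi(\bar x)-v^T(x-\bar x)}{\|x-\bar x\|}\ge 0$. SR2 algorithm: parameters $0<\eta_1\le\eta_2<1$, $0<\gamma_3\le 1<\gamma_1\le\gamma_2$, a starting point $x_0$ where $\mathcal{R}$ is finite, $\sigma_0 \ge \sigma_{\min} > 0$. At iteration $t$: draw a random sample $\xi_t$, set $g_t := \nabla f(x_t,\xi_t)$, $\psi(s;x_t) := f(x_t,\xi_t) + g_t^T s + \mathcal{R}(x_t+s)$, $m(s;x_t,\sigma_t) := \psi(s;x_t) + \tfrac12\sigma_t\|s\|^2$, and compute $s_t \in \operatorname{argmin}_s m(s;x_t,\sigma_t)$ (if the sample is deemed inadequate, $s_t$ is set to $0$). Compute $\Delta F_t := F(x_t) - F(x_t+s_t)$, $\Delta\psi_t := \psi(0;x_t)-\psi(s_t;x_t)$, $\rho_t := \Delta F_t/\Delta\psi_t$ (with the convention $\rho_t = 0$ when $\Delta\psi_t = +\infty$). If $\rho_t \ge \eta_1$ (a successful iteration) set $x_{t+1} = x_t + s_t$, else $x_{t+1}=x_t$. Then choose $\sigma_{t+1} \in [\max(\sigma_{\min},\gamma_3\sigma_t),\sigma_t]$ if $\rho_t\ge\eta_2$; $\sigma_{t+1}\in[\sigma_t,\gamma_1\sigma_t]$ if $\eta_1\le\rho_t<\eta_2$; $\sigma_{t+1}\in[\gamma_1\sigma_t,\gamma_2\sigma_t]$ if $\rho_t<\eta_1$. Assumptions.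 (A1): there is $L>0$ with $\|\nabla f(x)-\nabla f(y)\|\le L\|x-y\|$ for all $x,y$; $\mathcal{R}$ is proper and lower semicontinuous everywhere, and $s\mapsto\mathcal{R}(x_t+s)$ is prox-bounded, with threshold $\lambda_{x_t}$, for every iterate $x_t$. (A3): there is $\kappa_m>0$ such that for all $t$, $|f(x_t+s_t)-f(x_t)-g_t^Ts_t| \le \kappa_m\|s_t\|^2$; moreover $\mathbb{E}_\xi[f(x_t,\xi)] = f(x_t)$ and $\mathbb{E}_\xi[g_t] = \nabla f(x_t)$. (A5): there is $\lambda>0$ with $\lambda_{x_t}\ge\lambda$ for all iterates $x_t$. Notation: $\sigma_{\max}$ is a constant with $\sigma_t\le\sigma_{\max}$ for all $t$ (e.g. $\max\{\sigma_0,\gamma_2\sigma_{\textup{succ}}\}$ with $\sigma_{\textup{succ}} := \max(2\kappa_m/(1-\eta_2),1/\lambda)$). For a sample $\xi$ drawn at iterate $x_t$, $g^\xi := \nabla f(x_t,\xi)$ and $s^\xi$ is the corresponding step; $\mathbb{E}_{\hat\xi_t}$ denotes expectation over the distribution of samples $\xi$ that yield a successful iteration given $x_t$. *)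

theory Defs
  imports "HOL-Analysis.Analysis" "HOL-Probability.Probability"
begin

(* Euclidean space R^n is modelled as real^'n.  Component functions f_i are indexed by
   i in {1..N}; a sample is a finite set xi of indices (nonempty subset of {1..N}). *)

definition grad :: "(real^'n \<Rightarrow> real) \<Rightarrow> real^'n \<Rightarrow> real^'n" where
  "grad \<phi> x = (THE D. GDERIV \<phi> x :> D)"

definition fbar :: "(nat \<Rightarrow> real^'n \<Rightarrow> real) \<Rightarrow> nat \<Rightarrow> real^'n \<Rightarrow> real" where
  "fbar fi N x = (\<Sum>i\<in>{1..N}. fi i x) / real N"

definition fsamp :: "(nat \<Rightarrow> real^'n \<Rightarrow> real) \<Rightarrow> nat set \<Rightarrow> real^'n \<Rightarrow> real" where
  "fsamp fi \<xi> x = (\<Sum>j\<in>\<xi>. fi j x) / real (card \<xi>)"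

definition gsamp :: "(nat \<Rightarrow> real^'n \<Rightarrow> real) \<Rightarrow> nat set \<Rightarrow> real^'n \<Rightarrow> real^'n" where
  "gsamp fi \<xi> x = (1 / real (card \<xi>)) *\<^sub>R (\<Sum>j\<in>\<xi>. grad (fi j) x)"

definition Fobj :: "(nat \<Rightarrow> real^'n \<Rightarrow> real) \<Rightarrow> nat \<Rightarrow> (real^'n \<Rightarrow> ereal) \<Rightarrow> real^'n \<Rightarrow> ereal" where
  "Fobj fi N R x = ereal (fbar fi N x) + R x"

definition psi :: "(nat \<Rightarrow> real^'n \<Rightarrow> real) \<Rightarrow> (real^'n \<Rightarrow> ereal) \<Rightarrow> nat set \<Rightarrow> real^'n \<Rightarrow> real^'n \<Rightarrow> ereal" where
  "psi fi R \<xi> x s = ereal (fsamp fi \<xi> x + gsamp fi \<xi> x \<bullet> s) + R (x + s)"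

definition model :: "(nat \<Rightarrow> real^'n \<Rightarrow> real) \<Rightarrow> (real^'n \<Rightarrow> ereal) \<Rightarrow> nat set \<Rightarrow> real^'n \<Rightarrow> real \<Rightarrow> real^'n \<Rightarrow> ereal" where
  "model fi R \<xi> x \<sigma> s = psi fi R \<xi> x s + ereal (\<sigma> / 2 * (norm s)^2)"

definition is_model_minimizer ::
  "(nat \<Rightarrow> real^'n \<Rightarrow> real) \<Rightarrow> (real^'n \<Rightarrow> ereal) \<Rightarrow> nat set \<Rightarrow> real^'n \<Rightarrow> real \<Rightarrow> real^'n \<Rightarrow> bool" where
  "is_model_minimizer fi R \<xi> x \<sigma> s \<longleftrightarrow> (\<forall>s'. model fi R \<xi> x \<sigma> s \<le> model fi R \<xi> x \<sigma> s')"

definition rho :: "(nat \<Rightarrow> real^'n \<Rightarrow> real) \<Rightarrow> nat \<Rightarrow> (real^'n \<Rightarrow> ereal) \<Rightarrow> nat set \<Rightarrow> real^'n \<Rightarrow> real^'n \<Rightarrow> ereal" where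
  "rho fi N R \<xi> x s =
     (let dF = Fobj fi N R x - Fobj fi N R (x + s);
          dpsi = psi fi R \<xi> x 0 - psi fi R \<xi> x s
      in if dpsi = \<infinity> then 0 else dF / dpsi)"

definition proper_fun :: "('a \<Rightarrow> ereal) \<Rightarrow> bool" where
  "proper_fun R \<longleftrightarrow> (\<forall>x. R x \<noteq> -\<infinity>) \<and> (\<exists>x. \<bar>R x\<bar> \<noteq> \<infinity>)"

definition lsc_everywhere :: "('a::topological_space \<Rightarrow> ereal) \<Rightarrow> bool" where
  "lsc_everywhere R \<longleftrightarrow> (\<forall>x. R x \<le> Liminf (at x) R)"

definition prox_bounded_at :: "(real^'n \<Rightarrow> ereal) \<Rightarrow> real \<Rightarrow> bool" where
  "prox_bounded_at R \<mu> \<longleftrightarrow> \<mu> > 0 \<and>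
     (\<exists>x. (INF w. ereal (1 / 2 * inverse \<mu> * (norm (x - w))^2) + R w) > -\<infinity>)"

definition prox_bounded :: "(real^'n \<Rightarrow> ereal) \<Rightarrow> bool" where
  "prox_bounded R \<longleftrightarrow> (\<exists>\<mu>. prox_bounded_at R \<mu>)"

definition prox_threshold :: "(real^'n \<Rightarrow> ereal) \<Rightarrow> ereal" where
  "prox_threshold R = Sup (ereal ` {\<mu>. prox_bounded_at R \<mu>})"

definition frechet_subdiff :: "(real^'n \<Rightarrow> ereal) \<Rightarrow> real^'n \<Rightarrow> (real^'n) set" where
  "frechet_subdiff \<phi> xb =
     (if \<bar>\<phi> xb\<bar> = \<infinity> then {}
      else {v. Liminf (at xb)
                 (\<lambda>x. (\<phi> x - \<phi> xb - ereal (v \<bullet> (x - xb))) / ereal (norm (x - xb))) \<ge> 0})"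

(* dist(0, S), with dist(0, {}) = +infinity *)
definition dist0 :: "(real^'n) set \<Rightarrow> ennreal" where
  "dist0 S = (INF v\<in>S. ennreal (norm v))"

definition succ_samples ::
  "(nat \<Rightarrow> real^'n \<Rightarrow> real) \<Rightarrow> nat \<Rightarrow> (real^'n \<Rightarrow> ereal) \<Rightarrow> real \<Rightarrow> nat set pmf \<Rightarrow> real^'n
   \<Rightarrow> (nat set \<Rightarrow> real^'n) \<Rightarrow> nat set set" where
  "succ_samples fi N R \<eta>1 D x step = {\<xi> \<in> set_pmf D. rho fi N R \<xi> x (step \<xi>) \<ge> ereal \<eta>1}"

(* E over samples yielding a successful iteration: conditional distribution of D on the
   successful samples *)
definition Ehat :: "nat set pmf \<Rightarrow> nat set set \<Rightarrow> (nat set \<Rightarrow> ennreal) \<Rightarrow> ennreal" where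
  "Ehat D S h = (\<integral>\<^sup>+ \<xi>. h \<xi> \<partial>(measure_pmf (cond_pmf D S)))"

end

theory Submission
  imports Defs
begin

lemma rho_zero: assumes "proper_fun R" shows "rho fi N R \<xi> x 0 = 0"
proof -
  have "R x \<noteq> -\<infinity>" using assms by (simp add: proper_fun_def)
  then show ?thesis
    unfolding rho_def psi_def Fobj_def Let_def
    by (cases "R x") auto
qed
lemma grad_ok: assumes "fbar fi N differentiable (at y)"
  shows "GDERIV (fbar fi N) y :> grad (fbar fi N) y"
proof -
  obtain f' where f': "(fbar fi N has_derivative f') (at y)" using assms
    unfolding differentiable_def by blast
  have lin: "linear f'" using f' has_derivative_linear by blast
  define D where "D = adjoint f' (1::real)"
  have eq: "f' = (\<lambda>h. h \<bullet> D)"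
    using adjoint_works[OF lin] by (auto simp: D_def)
  have G: "GDERIV (fbar fi N) y :> D" unfolding gderiv_def using f' eq by simp
  have "(THE D. GDERIV (fbar fi N) y :> D) = D"
  proof (rule the_equality)
    show "GDERIV (fbar fi N) y :> D" by (rule G)
  next
    fix D' assume "GDERIV (fbar fi N) y :> D'"
    then have "(\<lambda>h. h \<bullet> D') = (\<lambda>h. h \<bullet> D)"
      using G unfolding gderiv_def by (rule has_derivative_unique)
    then have "(D' - D) \<bullet> D' = (D' - D) \<bullet> D" by metis
    then have "(D' - D) \<bullet> (D' - D) = 0" by (simp add: inner_diff_right)
    then show "D' = D" by simp
  qed
  then show ?thesis using G by (simp add: grad_def)
qed

lemma frechet_min:
  fixes f :: "real^'n \<Rightarrow> real" and R :: "real^'n \<Rightarrow> ereal"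
  assumes G: "GDERIV f y :> D" and Ry: "R y = ereal ry" and Rn: "\<forall>z. R z \<noteq> -\<infinity>"
    and mn: "\<forall>z. ereal (c + g \<bullet> (y - x)) + R y + ereal (\<sigma> / 2 * (norm (y - x))^2)
               \<le> ereal (c + g \<bullet> (z - x)) + R z + ereal (\<sigma> / 2 * (norm (z - x))^2)"
  shows "D - g - \<sigma> *\<^sub>R (y - x) \<in> frechet_subdiff (\<lambda>z. ereal (f z) + R z) y"
proof -
  define v where "v = D - g - \<sigma> *\<^sub>R (y - x)"
  have lim1: "((\<lambda>z. norm (f z - f y - (z - y) \<bullet> D) / norm (z - y)) \<longlongrightarrow> 0) (at y)"
    using G unfolding gderiv_def has_derivative_iff_norm by simp
  have lim2: "((\<lambda>z. \<sigma> / 2 * norm (z - y)) \<longlongrightarrow> 0) (at y)"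
  proof -
    have "((\<lambda>z. \<sigma> / 2 * norm (z - y)) \<longlongrightarrow> \<sigma> / 2 * norm (y - y)) (at y)"
      by (intro tendsto_intros)
    then show ?thesis by simp
  qed
  have key: "ereal e < (ereal (f z) + R z - (ereal (f y) + R y) - ereal (v \<bullet> (z - y))) / ereal (norm (z - y))"
    if e: "e < 0" and zy: "z \<noteq> y"
      and A: "norm (f z - f y - (z - y) \<bullet> D) / norm (z - y) < - e / 2"
      and B: "\<bar>\<sigma> / 2 * norm (z - y)\<bar> < - e / 2" for e z
  proof (cases "R z")
    case PInf
    have "norm (z - y) > 0" using zy by simp
    then show ?thesis using PInf Ry by simp
  next
    case MInf then show ?thesis using Rn by simp
  next
    case (real rz)
    have m: "c + g \<bullet> (y - x) + ry + \<sigma> / 2 * (norm (y - x))^2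
               \<le> c + g \<bullet> (z - x) + rz + \<sigma> / 2 * (norm (z - x))^2"
      using mn[rule_format, of z] real Ry by simp
    define a where "a = y - x"
    define h where "h = z - y"
    have zx: "z - x = a + h" by (simp add: a_def h_def)
    have n2: "norm (a + h)^2 = norm a^2 + 2*(a \<bullet> h) + norm h^2"
      by (simp add: power2_norm_eq_inner inner_add_left inner_add_right inner_commute algebra_simps)
    have hp: "norm h > 0" using zy by (simp add: h_def)
    have num: "f z + rz - (f y + ry) - v \<bullet> h \<ge> (f z - f y - h \<bullet> D) - \<sigma> / 2 * norm h ^ 2"
      using m unfolding zx n2 v_def
      by (simp add: a_def[symmetric] h_def[symmetric] inner_diff_left inner_diff_right inner_add_right inner_commute algebra_simps)
    have "(f z + rz - (f y + ry) - v \<bullet> h) / norm h \<ge> ((f z - f y - h \<bullet> D) - \<sigma> / 2 * norm h ^ 2) / norm h"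
      using num hp by (simp add: divide_right_mono)
    also have "((f z - f y - h \<bullet> D) - \<sigma> / 2 * norm h ^ 2) / norm h
        = (f z - f y - h \<bullet> D) / norm h - \<sigma> / 2 * norm h"
      using hp by (simp add: diff_divide_distrib power2_eq_square)
    finally have q: "(f z + rz - (f y + ry) - v \<bullet> h) / norm h \<ge> (f z - f y - h \<bullet> D) / norm h - \<sigma> / 2 * norm h" .
    have "\<bar>(f z - f y - h \<bullet> D) / norm h\<bar> < - e / 2" using A hp by (simp add: h_def)
    then have "e < (f z + rz - (f y + ry) - v \<bullet> h) / norm h" using q B unfolding h_def by linarith
    moreover have "ereal (f z) + R z - (ereal (f y) + R y) - ereal (v \<bullet> (z - y))
        = ereal (f z + rz - (f y + ry) - v \<bullet> h)" using real Ry by (simp add: h_def)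
    moreover have "ereal (f z + rz - (f y + ry) - v \<bullet> h) / ereal (norm (z - y))
        = ereal ((f z + rz - (f y + ry) - v \<bullet> h) / norm h)"
      using hp by (simp add: h_def ereal_divide)
    ultimately show ?thesis by simp
  qed
  have fin: "\<not> \<bar>ereal (f y) + ereal ry\<bar> = \<infinity>" by simp
  show ?thesis
    unfolding frechet_subdiff_def v_def[symmetric] Ry if_not_P[OF fin] mem_Collect_eq
  proof (rule le_Liminf_iff[THEN iffD2], intro allI impI)
    fix e0 :: ereal assume e0: "e0 < 0"
    obtain e where e: "e < 0" "e0 \<le> ereal e"
    proof (cases e0)
      case MInf then show ?thesis using that[of "-1"] by simp
    qed (use that e0 in auto)
    have ev1: "\<forall>\<^sub>F z in at y. norm (f z - f y - (z - y) \<bullet> D) / norm (z - y) < - e / 2"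
      using lim1 e by (intro order_tendstoD) auto
    have ev2: "\<forall>\<^sub>F z in at y. \<bar>\<sigma> / 2 * norm (z - y)\<bar> < - e / 2"
      using tendsto_rabs[OF lim2] e by (intro order_tendstoD) auto
    have ev3: "\<forall>\<^sub>F z in at y. z \<noteq> y" by (simp add: eventually_at_filter)
    have "\<forall>\<^sub>F z in at y. ereal e < (ereal (f z) + R z - (ereal (f y) + ereal ry) - ereal (v \<bullet> (z - y))) / ereal (norm (z - y))"
      using ev1 ev2 ev3 by eventually_elim (use key e Ry in auto)
    then show "\<forall>\<^sub>F z in at y. e0 < (ereal (f z) + R z - (ereal (f y) + ereal ry) - ereal (v \<bullet> (z - y))) / ereal (norm (z - y))"
      by eventually_elim (use e in auto)
  qed
qed

lemma pointwise:
  fixes fi :: "nat \<Rightarrow> real^'n \<Rightarrow> real"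
  assumes GD: "\<And>y. GDERIV (fbar fi N) y :> grad (fbar fi N) y"
    and Lip: "\<forall>y z. norm (grad (fbar fi N) y - grad (fbar fi N) z) \<le> L * norm (y - z)"
    and pr: "proper_fun R"
    and mz: "is_model_minimizer fi R \<xi> xT \<sigma> s"
    and sg: "0 \<le> \<sigma>" "\<sigma> \<le> \<sigma>max"
  shows "(dist0 (frechet_subdiff (Fobj fi N R) (xT + s)))^2
     \<le> ennreal (3 * (L^2 + \<sigma>max^2) * (norm s)^2)
        + 3 * ennreal ((norm (grad (fbar fi N) xT - gsamp fi \<xi> xT))^2)"
proof -
  define y where "y = xT + s"
  define c where "c = fsamp fi \<xi> xT"
  define g where "g = gsamp fi \<xi> xT"
  have Rn: "\<forall>z. R z \<noteq> -\<infinity>" using pr by (simp add: proper_fun_def)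
  obtain z0 where z0: "\<bar>R z0\<bar> \<noteq> \<infinity>" using pr unfolding proper_fun_def by (elim conjE exE) (rule that)
  have mn: "\<forall>z. ereal (c + g \<bullet> (y - xT)) + R y + ereal (\<sigma> / 2 * (norm (y - xT))^2)
               \<le> ereal (c + g \<bullet> (z - xT)) + R z + ereal (\<sigma> / 2 * (norm (z - xT))^2)"
  proof
    fix z
    show "ereal (c + g \<bullet> (y - xT)) + R y + ereal (\<sigma> / 2 * (norm (y - xT))^2)
               \<le> ereal (c + g \<bullet> (z - xT)) + R z + ereal (\<sigma> / 2 * (norm (z - xT))^2)"
      using mz[unfolded is_model_minimizer_def, rule_format, of "z - xT"]
      by (simp add: model_def psi_def y_def c_def g_def)
  qed
  have "R y \<noteq> \<infinity>"
  proof
    assume "R y = \<infinity>"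
    then have "ereal (c + g \<bullet> (y - xT)) + R y + ereal (\<sigma> / 2 * (norm (y - xT))^2) = \<infinity>" by simp
    moreover have "ereal (c + g \<bullet> (z0 - xT)) + R z0 + ereal (\<sigma> / 2 * (norm (z0 - xT))^2) \<noteq> \<infinity>"
      using z0 by (cases "R z0") auto
    ultimately show False using mn[rule_format, of z0] by (metis ereal_infty_less_eq(1))
  qed
  then obtain ry where Ry: "R y = ereal ry" using Rn by (cases "R y") auto
  define v where "v = grad (fbar fi N) y - g - \<sigma> *\<^sub>R (y - xT)"
  have Fe: "Fobj fi N R = (\<lambda>z. ereal (fbar fi N z) + R z)" by (simp add: Fobj_def fun_eq_iff)
  have vin: "v \<in> frechet_subdiff (Fobj fi N R) y"
    unfolding Fe v_def by (rule frechet_min[OF GD Ry Rn mn])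
  have d: "dist0 (frechet_subdiff (Fobj fi N R) y) \<le> ennreal (norm v)"
    unfolding dist0_def by (rule INF_lower[OF vin])
  have d2: "(dist0 (frechet_subdiff (Fobj fi N R) y))^2 \<le> ennreal ((norm v)^2)"
    using power_mono[OF d, of 2] by (simp add: ennreal_power)
  define p where "p = norm (grad (fbar fi N) y - grad (fbar fi N) xT)"
  define q where "q = norm (grad (fbar fi N) xT - g)"
  have vs: "v = (grad (fbar fi N) y - grad (fbar fi N) xT) + (grad (fbar fi N) xT - g) - \<sigma> *\<^sub>R s"
    by (simp add: v_def y_def)
  have nv: "norm v \<le> p + q + \<sigma> * norm s"
  proof -
    have "norm v \<le> norm ((grad (fbar fi N) y - grad (fbar fi N) xT) + (grad (fbar fi N) xT - g)) + norm (\<sigma> *\<^sub>R s)"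
      unfolding vs by (rule norm_triangle_ineq4)
    also have "\<dots> \<le> p + q + norm (\<sigma> *\<^sub>R s)"
      unfolding p_def q_def using norm_triangle_ineq by (rule add_right_mono)
    also have "norm (\<sigma> *\<^sub>R s) = \<sigma> * norm s" using sg by simp
    finally show ?thesis .
  qed
  have pL: "p \<le> L * norm s" using Lip unfolding p_def y_def by (metis add_diff_cancel_left')
  have p0: "0 \<le> p" "0 \<le> q" by (auto simp: p_def q_def)
  define r where "r = \<sigma> * norm s"
  have r0: "0 \<le> r" using sg by (simp add: r_def)
  have "(norm v)^2 \<le> (p + q + r)^2"
    using nv p0 r0 unfolding r_def by (intro power_mono) auto
  also have "\<dots> \<le> 3 * (p^2 + q^2 + r^2)"
  proof -
    have e0: "0 \<le> (p-q)^2 + (q-r)^2 + (p-r)^2" by simp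
    have e1: "(p+q+r)^2 = p*p+q*q+r*r+2*(p*q)+2*(q*r)+2*(p*r)" by (simp add: power2_eq_square algebra_simps)
    have e2: "(p-q)^2 + (q-r)^2 + (p-r)^2 = 2*(p*p)+2*(q*q)+2*(r*r)-2*(p*q)-2*(q*r)-2*(p*r)"
      by (simp add: power2_eq_square algebra_simps)
    have e3: "3 * (p^2 + q^2 + r^2) = 3*(p*p)+3*(q*q)+3*(r*r)" by (simp add: power2_eq_square)
    show ?thesis using e0 e1 e2 e3 by linarith
  qed
  also have "\<dots> \<le> 3 * ((L * norm s)^2 + q^2 + (\<sigma>max * norm s)^2)"
  proof -
    have "p^2 \<le> (L * norm s)^2" using pL p0 by (intro power_mono) auto
    moreover have "r \<le> \<sigma>max * norm s" unfolding r_def using sg by (intro mult_right_mono) auto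
    then have "r^2 \<le> (\<sigma>max * norm s)^2" using r0 by (intro power_mono) auto
    ultimately have "p^2 + q^2 + r^2 \<le> (L * norm s)^2 + q^2 + (\<sigma>max * norm s)^2"
      by (intro add_mono order_refl)
    then show ?thesis by (rule mult_left_mono) simp
  qed
  also have "\<dots> = 3 * (L^2 + \<sigma>max^2) * (norm s)^2 + 3 * q^2"
    by (simp add: power_mult_distrib distrib_left distrib_right)
  finally have nv2: "(norm v)^2 \<le> 3 * (L^2 + \<sigma>max^2) * (norm s)^2 + 3 * q^2" .
  have "ennreal ((norm v)^2) \<le> ennreal (3 * (L^2 + \<sigma>max^2) * (norm s)^2 + 3 * q^2)"
    using nv2 by (rule ennreal_leI)
  also have "\<dots> = ennreal (3 * (L^2 + \<sigma>max^2) * (norm s)^2) + 3 * ennreal (q^2)"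
    by (simp add: ennreal_plus numeral_mult_ennreal)
  finally show ?thesis using d2 unfolding y_def q_def g_def by simp
qed

lemma fbar_diff: assumes "\<forall>i\<in>{1..N}. \<forall>y. fi i differentiable (at y)"
  shows "fbar fi N differentiable (at y)"
  unfolding fbar_def using assms by (cases "N=0") (auto intro!: derivative_intros)
theorem theorem4:
  fixes fi :: "nat \<Rightarrow> real^'n \<Rightarrow> real" and N :: nat and R :: "real^'n \<Rightarrow> ereal"
    and \<eta>1 \<eta>2 \<gamma>1 \<gamma>2 \<gamma>3 \<sigma>min \<sigma>max L \<epsilon> :: real
    and x :: "nat \<Rightarrow> real^'n" and \<sigma> :: "nat \<Rightarrow> real"
    and D :: "nat \<Rightarrow> nat set pmf"
    and step :: "nat \<Rightarrow> nat set \<Rightarrow> real^'n"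
    and \<xi>s :: "nat \<Rightarrow> nat set" and T :: nat
  assumes N: "N \<ge> 1"
    and fi_diff: "\<forall>i\<in>{1..N}. \<forall>y. fi i differentiable (at y)"
    \<comment> \<open>SR2 parameters\<close>
    and eta: "0 < \<eta>1" "\<eta>1 \<le> \<eta>2" "\<eta>2 < 1"
    and gam: "0 < \<gamma>3" "\<gamma>3 \<le> 1" "1 < \<gamma>1" "\<gamma>1 \<le> \<gamma>2"
    and x0: "\<bar>R (x 0)\<bar> \<noteq> \<infinity>"
    and sig0: "\<sigma> 0 \<ge> \<sigma>min" "\<sigma>min > 0"
    \<comment> \<open>samples: D t is the distribution of the sample at iteration t, \<xi>s t the drawn one\<close>
    and samples: "\<forall>t. \<forall>\<xi>\<in>set_pmf (D t). \<xi> \<noteq> {} \<and> \<xi> \<subseteq> {1..N}"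
    and drawn: "\<forall>t. \<xi>s t \<in> set_pmf (D t)"
    \<comment> \<open>steps: a minimizer of the model, or 0 if the sample is deemed inadequate\<close>
    and steps: "\<forall>t. \<forall>\<xi>\<in>set_pmf (D t).
                  is_model_minimizer fi R \<xi> (x t) (\<sigma> t) (step t \<xi>) \<or> step t \<xi> = 0"
    and x_upd: "\<forall>t. x (Suc t) =
         (if rho fi N R (\<xi>s t) (x t) (step t (\<xi>s t)) \<ge> ereal \<eta>1
          then x t + step t (\<xi>s t) else x t)"
    and sig_upd: "\<forall>t. let r = rho fi N R (\<xi>s t) (x t) (step t (\<xi>s t)) in
         (r \<ge> ereal \<eta>2 \<longrightarrow> max \<sigma>min (\<gamma>3 * \<sigma> t) \<le> \<sigma> (Suc t) \<and> \<sigma> (Suc t) \<le> \<sigma> t) \<and>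
         (ereal \<eta>1 \<le> r \<and> r < ereal \<eta>2 \<longrightarrow> \<sigma> t \<le> \<sigma> (Suc t) \<and> \<sigma> (Suc t) \<le> \<gamma>1 * \<sigma> t) \<and>
         (r < ereal \<eta>1 \<longrightarrow> \<gamma>1 * \<sigma> t \<le> \<sigma> (Suc t) \<and> \<sigma> (Suc t) \<le> \<gamma>2 * \<sigma> t)"
    \<comment> \<open>(A1)\<close>
    and A1_L: "L > 0" "\<forall>y z. norm (grad (fbar fi N) y - grad (fbar fi N) z) \<le> L * norm (y - z)"
    and A1_R: "proper_fun R" "lsc_everywhere R"
    and A1_prox: "\<forall>t. prox_bounded (\<lambda>s. R (x t + s))"
    \<comment> \<open>(A3)\<close>
    and A3_model: "\<exists>\<kappa>m>0. \<forall>t.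
         \<bar>fbar fi N (x t + step t (\<xi>s t)) - fbar fi N (x t)
            - gsamp fi (\<xi>s t) (x t) \<bullet> step t (\<xi>s t)\<bar> \<le> \<kappa>m * (norm (step t (\<xi>s t)))^2"
    and A3_unbiased_f: "\<forall>t. measure_pmf.expectation (D t) (\<lambda>\<xi>. fsamp fi \<xi> (x t)) = fbar fi N (x t)"
    and A3_unbiased_g: "\<forall>t. measure_pmf.expectation (D t) (\<lambda>\<xi>. gsamp fi \<xi> (x t)) = grad (fbar fi N) (x t)"
    \<comment> \<open>(A5)\<close>
    and A5: "\<exists>lam>0. \<forall>t. prox_threshold (\<lambda>s. R (x t + s)) \<ge> ereal lam"
    \<comment> \<open>sigma_max\<close>
    and sigmax: "\<forall>t. \<sigma> t \<le> \<sigma>max"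
    \<comment> \<open>epsilon and t(epsilon)\<close>
    and eps: "0 < \<epsilon>" "\<epsilon> < 1"
    and t_exists: "\<exists>t. succ_samples fi N R \<eta>1 (D t) (x t) (step t) \<noteq> {} \<and>
         Ehat (D t) (succ_samples fi N R \<eta>1 (D t) (x t) (step t))
              (\<lambda>\<xi>. ennreal ((norm (step t \<xi>))^2)) \<le> ennreal (\<epsilon>^2)"
    and T_def: "T = (LEAST t. succ_samples fi N R \<eta>1 (D t) (x t) (step t) \<noteq> {} \<and>
         Ehat (D t) (succ_samples fi N R \<eta>1 (D t) (x t) (step t))
              (\<lambda>\<xi>. ennreal ((norm (step t \<xi>))^2)) \<le> ennreal (\<epsilon>^2))"
  shows "Ehat (D T) (succ_samples fi N R \<eta>1 (D T) (x T) (step T))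
            (\<lambda>\<xi>. (dist0 (frechet_subdiff (Fobj fi N R) (x T + step T \<xi>)))^2)
         \<le> ennreal (3 * (L^2 + \<sigma>max^2) * \<epsilon>^2)
           + 3 * Ehat (D T) (succ_samples fi N R \<eta>1 (D T) (x T) (step T))
              (\<lambda>\<xi>. ennreal ((norm (grad (fbar fi N) (x T) - gsamp fi \<xi> (x T)))^2))"
  proof -
  have sgmin: "\<sigma>min \<le> \<sigma> t" for t
  proof (induction t)
    case 0 then show ?case using sig0 by simp
  next
    case (Suc t)
    define r where "r = rho fi N R (\<xi>s t) (x t) (step t (\<xi>s t))"
    from sig_upd have su: "(r \<ge> ereal \<eta>2 \<longrightarrow> max \<sigma>min (\<gamma>3 * \<sigma> t) \<le> \<sigma> (Suc t) \<and> \<sigma> (Suc t) \<le> \<sigma> t) \<and>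
         (ereal \<eta>1 \<le> r \<and> r < ereal \<eta>2 \<longrightarrow> \<sigma> t \<le> \<sigma> (Suc t) \<and> \<sigma> (Suc t) \<le> \<gamma>1 * \<sigma> t) \<and>
         (r < ereal \<eta>1 \<longrightarrow> \<gamma>1 * \<sigma> t \<le> \<sigma> (Suc t) \<and> \<sigma> (Suc t) \<le> \<gamma>2 * \<sigma> t)"
      unfolding r_def Let_def by (rule spec)
    have g1: "\<sigma> t \<le> \<gamma>1 * \<sigma> t" using Suc.IH sig0 gam
      using mult_right_mono[of 1 \<gamma>1 "\<sigma> t"] by simp
    consider "r \<ge> ereal \<eta>2" | "ereal \<eta>1 \<le> r \<and> r < ereal \<eta>2" | "r < ereal \<eta>1"
    proof -
      have cs: "r \<ge> ereal \<eta>2 \<or> (ereal \<eta>1 \<le> r \<and> r < ereal \<eta>2) \<or> r < ereal \<eta>1" by auto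
      then show ?thesis using that by blast
    qed
    then show ?case
    proof cases
      case 1 then show ?thesis using su by simp
    next
      case 2 then show ?thesis using su Suc.IH by linarith
    next
      case 3 then show ?thesis using su Suc.IH g1 by linarith
    qed
  qed
  have GD: "\<And>y. GDERIV (fbar fi N) y :> grad (fbar fi N) y"
    using grad_ok fbar_diff fi_diff by blast
  define S where "S = succ_samples fi N R \<eta>1 (D T) (x T) (step T)"
  define C where "C = 3 * (L^2 + \<sigma>max^2)"
  have C0: "0 \<le> C" by (simp add: C_def)
  have TP: "S \<noteq> {} \<and> Ehat (D T) S (\<lambda>\<xi>. ennreal ((norm (step T \<xi>))^2)) \<le> ennreal (\<epsilon>^2)"
    unfolding S_def T_def by (rule LeastI_ex[OF t_exists])
  have Ssub: "S \<subseteq> set_pmf (D T)" by (auto simp: S_def succ_samples_def)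
  have ne: "set_pmf (D T) \<inter> S \<noteq> {}" using TP Ssub by blast
  have pw: "(dist0 (frechet_subdiff (Fobj fi N R) (x T + step T \<xi>)))^2
     \<le> ennreal C * ennreal ((norm (step T \<xi>))^2)
        + 3 * ennreal ((norm (grad (fbar fi N) (x T) - gsamp fi \<xi> (x T)))^2)"
    if xi: "\<xi> \<in> set_pmf (cond_pmf (D T) S)" for \<xi>
  proof -
    have xS: "\<xi> \<in> S" and xD: "\<xi> \<in> set_pmf (D T)" using xi set_cond_pmf[OF ne] by auto
    have rh: "rho fi N R \<xi> (x T) (step T \<xi>) \<ge> ereal \<eta>1" using xS by (simp add: S_def succ_samples_def)
    have mz: "is_model_minimizer fi R \<xi> (x T) (\<sigma> T) (step T \<xi>)"
    proof (rule ccontr)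
      assume "\<not> ?thesis"
      then have "step T \<xi> = 0" using steps xD by blast
      then have "rho fi N R \<xi> (x T) (step T \<xi>) = 0" using rho_zero[OF A1_R(1)] by simp
      then show False using rh eta by simp
    qed
    have "\<sigma> T > 0" using sgmin[of T] sig0 by simp
    then have "(dist0 (frechet_subdiff (Fobj fi N R) (x T + step T \<xi>)))^2
     \<le> ennreal (3 * (L^2 + \<sigma>max^2) * (norm (step T \<xi>))^2)
        + 3 * ennreal ((norm (grad (fbar fi N) (x T) - gsamp fi \<xi> (x T)))^2)"
      using pointwise[OF GD A1_L(2) A1_R(1) mz, of \<sigma>max] sigmax by simp
    then show ?thesis using C0 by (simp add: C_def ennreal_mult)
  qed
  have "Ehat (D T) S (\<lambda>\<xi>. (dist0 (frechet_subdiff (Fobj fi N R) (x T + step T \<xi>)))^2)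
     \<le> (\<integral>\<^sup>+ \<xi>. ennreal C * ennreal ((norm (step T \<xi>))^2)
        + 3 * ennreal ((norm (grad (fbar fi N) (x T) - gsamp fi \<xi> (x T)))^2) \<partial>(measure_pmf (cond_pmf (D T) S)))"
    unfolding Ehat_def by (intro nn_integral_mono_AE AE_pmfI pw)
  also have "\<dots> = ennreal C * Ehat (D T) S (\<lambda>\<xi>. ennreal ((norm (step T \<xi>))^2))
      + 3 * Ehat (D T) S (\<lambda>\<xi>. ennreal ((norm (grad (fbar fi N) (x T) - gsamp fi \<xi> (x T)))^2))"
    unfolding Ehat_def by (simp add: nn_integral_add nn_integral_cmult)
  also have "\<dots> \<le> ennreal C * ennreal (\<epsilon>^2)
      + 3 * Ehat (D T) S (\<lambda>\<xi>. ennreal ((norm (grad (fbar fi N) (x T) - gsamp fi \<xi> (x T)))^2))"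
    using TP by (intro add_mono mult_left_mono) auto
  also have "ennreal C * ennreal (\<epsilon>^2) = ennreal (3 * (L^2 + \<sigma>max^2) * \<epsilon>^2)"
    using C0 by (simp add: C_def ennreal_mult)
  finally show ?thesis unfolding S_def .
qed


end
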